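(* Let $V\in L^1_{\mathrm{loc}}(\mathbb{R})$ be complex-valued and periodic of period $\pi$, and suppose $\overline{V(-x)}=V(x)$ for all $x\in\mathbb{R}$ (equivalently, $\overline{V(\pi-x)}=V(x)$ for all $x\in[0,\pi]$). Then for every $j\in\mathbb{N}$, $k\in\mathbb{N}_0$ and $x_0\in[0,\pi]$, $$\overline{\mu_j(\pi-x_0)}=\mu_j(x_0)\quad\text{and}\quad \overline{\nu_k(\pi-x_0)}=\nu_k(x_0).$$
   Context: For $\lambda\in\mathbb{C}$ and $x_0\in\mathbb{R}$, let $c(\lambda,x_0,\cdot)$ and $s(\lambda,x_0,\cdot)$ be the solutions of $-\psi''+V\psi=\lambda\psi$ on $\mathbb{R}$ with $c(\lambda,x_0,x_0)=1$, $c'(\lambda,x_0,x_0)=0$, $s(\lambda,x_0,x_0)=0$, $s'(\lambda,x_0,x_0)=1$ ($'$ = derivative in the last variable). The Dirichlet eigenvalues $\mu_j(x_0)$, $j\in\mathbb{N}$, are the zeros of $\lambda\mapsto s(\lambda,x_0,x_0+\pi)$ (eigenvalues of $-d^2/dx^2+V$ on $[x_0,x_0+\pi]$ with Dirichlet conditions at both ends), and the Neumann eigenvalues $\nu_k(x_0)$, $k\in\mathbb{N}_0$, are the zeros of $\lambda\mapsto c'(\lambda,x_0,x_0+\pi)$ (Neumann conditions at both ends); each sequence is listed with multiplicity and numbered in order of non-decreasing modulus.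
   Formalization: For every numbering of the Dirichlet (resp. Neumann) eigenvalues at $x_0$ by non-decreasing modulus, some such numbering at $\pi-x_0$ is its termwise complex conjugate; no single numbering $\mu_j$, $\nu_k$ is fixed. The statement above fails without it. *)

theory Defs
  imports "HOL-Complex_Analysis.Complex_Analysis"
begin

text \<open>psi (with derivative psi') solves -psi'' + V psi = lam psi on the real line in the
  Caratheodory sense: psi is differentiable with derivative psi', and psi' is absolutely
  continuous with psi'' = (V - lam) psi almost everywhere, expressed in integral form.\<close>
definition is_solution ::
  "(real \<Rightarrow> complex) \<Rightarrow> complex \<Rightarrow> (real \<Rightarrow> complex) \<Rightarrow> (real \<Rightarrow> complex) \<Rightarrow> bool" where
  "is_solution V lam psi psi' \<longleftrightarrow>
     (\<forall>x. (psi has_vector_derivative psi' x) (at x)) \<and>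
     (\<forall>a b. a \<le> b \<longrightarrow> ((\<lambda>t. (V t - lam) * psi t) has_integral (psi' b - psi' a)) {a..b})"

definition sol_c :: "(real \<Rightarrow> complex) \<Rightarrow> complex \<Rightarrow> real \<Rightarrow> real \<Rightarrow> complex" where
  "sol_c V lam x0 = (THE psi. \<exists>psi'. is_solution V lam psi psi' \<and> psi x0 = 1 \<and> psi' x0 = 0)"

definition sol_s :: "(real \<Rightarrow> complex) \<Rightarrow> complex \<Rightarrow> real \<Rightarrow> real \<Rightarrow> complex" where
  "sol_s V lam x0 = (THE psi. \<exists>psi'. is_solution V lam psi psi' \<and> psi x0 = 0 \<and> psi' x0 = 1)"

definition sol_c' :: "(real \<Rightarrow> complex) \<Rightarrow> complex \<Rightarrow> real \<Rightarrow> real \<Rightarrow> complex" where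
  "sol_c' V lam x0 x = vector_derivative (sol_c V lam x0) (at x)"

definition zero_enum :: "(complex \<Rightarrow> complex) \<Rightarrow> nat \<Rightarrow> (nat \<Rightarrow> complex) \<Rightarrow> bool" where
  "zero_enum f n0 mu \<longleftrightarrow>
     (\<forall>i j. n0 \<le> i \<longrightarrow> i \<le> j \<longrightarrow> cmod (mu i) \<le> cmod (mu j)) \<and>
     (\<forall>z. card {j. n0 \<le> j \<and> mu j = z} = (if f z = 0 then nat (zorder f z) else 0))"

definition dirichlet_enum :: "(real \<Rightarrow> complex) \<Rightarrow> real \<Rightarrow> (nat \<Rightarrow> complex) \<Rightarrow> bool" where
  "dirichlet_enum V x0 mu \<longleftrightarrow> zero_enum (\<lambda>lam. sol_s V lam x0 (x0 + pi)) 1 mu"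

definition neumann_enum :: "(real \<Rightarrow> complex) \<Rightarrow> real \<Rightarrow> (nat \<Rightarrow> complex) \<Rightarrow> bool" where
  "neumann_enum V x0 nu \<longleftrightarrow> zero_enum (\<lambda>lam. sol_c' V lam x0 (x0 + pi)) 0 nu"

end

theory Submission
  imports Defs
begin

definition zpred :: "(complex \<Rightarrow> complex) \<Rightarrow> complex \<Rightarrow> int \<Rightarrow> bool" where
 "zpred f z n = (\<exists>h r. r>0 \<and> h holomorphic_on cball z r \<and> h z\<noteq>0
                   \<and> (\<forall>w\<in>cball z r - {z}. f w =  h w * (w-z) powi n
                   \<and> h w \<noteq>0))"

lemma zpred_cnj:
  assumes "zpred f (cnj z) n"
  shows "zpred (\<lambda>w. cnj (f (cnj w))) z n"
proof -
  obtain h r where r: "r > 0" and h: "h holomorphic_on cball (cnj z) r" and hz: "h (cnj z) \<noteq> 0"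
    and fw: "\<And>w. w\<in>cball (cnj z) r - {cnj z} \<Longrightarrow> f w =  h w * (w - cnj z) powi n \<and> h w \<noteq> 0"
    using assms unfolding zpred_def by blast
  have hb: "h holomorphic_on cnj ` ball z r"
  proof -
    have "cnj ` ball z r \<subseteq> cball (cnj z) r"
      by (auto simp: dist_norm complex_cnj_diff[symmetric] simp del: complex_cnj_diff)
    then show ?thesis using h holomorphic_on_subset by blast
  qed
  have "cnj \<circ> h \<circ> cnj holomorphic_on ball z r"
    by (rule holomorphic_on_compose_cnj_cnj[OF hb]) auto
  then have H0: "(\<lambda>w. cnj (h (cnj w))) holomorphic_on ball z r" by (simp add: o_def)
  have "cball z (r/2) \<subseteq> ball z r" using r by (simp add: subset_eq)
  with H0 have H: "(\<lambda>w. cnj (h (cnj w))) holomorphic_on cball z (r/2)"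
    using holomorphic_on_subset by blast
  show ?thesis unfolding zpred_def
  proof (intro exI conjI)
    show "r/2 > 0" using r by simp
    show "(\<lambda>w. cnj (h (cnj w))) holomorphic_on cball z (r/2)" by (rule H)
    show "cnj (h (cnj z)) \<noteq> 0" using hz by simp
    show "\<forall>w\<in>cball z (r/2) - {z}. cnj (f (cnj w)) = cnj (h (cnj w)) * (w - z) powi n \<and> cnj (h (cnj w)) \<noteq> 0"
    proof
    fix w assume w: "w \<in> cball z (r/2) - {z}"
    then have "cnj w \<in> cball (cnj z) r - {cnj z}"
      using r by (auto simp: dist_norm complex_cnj_diff[symmetric] simp del: complex_cnj_diff)
    from fw[OF this] have "f (cnj w) = h (cnj w) * (cnj w - cnj z) powi n" "h (cnj w) \<noteq> 0" by auto
    then show "cnj (f (cnj w)) = cnj (h (cnj w)) * (w - z) powi n \<and> cnj (h (cnj w)) \<noteq> 0"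
      by (simp add: complex_cnj_diff[symmetric] del: complex_cnj_diff)
    qed
  qed
qed

lemma zorder_cnj: "zorder (\<lambda>w. cnj (f (cnj w))) z = zorder f (cnj z)"
proof -
  have "zpred (\<lambda>w. cnj (f (cnj w))) z n \<longleftrightarrow> zpred f (cnj z) n" for n
    using zpred_cnj[of f z n] zpred_cnj[of "\<lambda>w. cnj (f (cnj w))" "cnj z" n] by auto
  then show ?thesis unfolding zorder_def zpred_def[symmetric] by simp
qed

lemma zero_enum_cnj:
  assumes "zero_enum f n0 mu" and g: "\<And>z. g z = cnj (f (cnj z))"
  shows "zero_enum g n0 (\<lambda>j. cnj (mu j))"
proof -
  have gg: "g = (\<lambda>w. cnj (f (cnj w)))" using g by auto
  show ?thesis unfolding zero_enum_def
  proof (intro conjI allI impI)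
    fix i j assume "n0 \<le> i" "i \<le> j"
    then show "cmod (cnj (mu i)) \<le> cmod (cnj (mu j))" using assms(1) unfolding zero_enum_def by simp
  next
    fix z
    have "{j. n0 \<le> j \<and> cnj (mu j) = z} = {j. n0 \<le> j \<and> mu j = cnj z}" by auto
    then show "card {j. n0 \<le> j \<and> cnj (mu j) = z} = (if g z = 0 then nat (zorder g z) else 0)"
      using assms(1) unfolding zero_enum_def gg zorder_cnj by simp
  qed
qed


lemma qil_aux:
  fixes h W :: "real \<Rightarrow> real" and N :: nat
  assumes ab: "a \<le> b" and Wc: "continuous_on {a..b} W" and Wm: "mono_on {a..b} W"
   and inc: "\<And>x y. a \<le> x \<Longrightarrow> x \<le> y \<Longrightarrow> y \<le> b \<Longrightarrow> h y - h x \<le> C * (W y - W x)^2"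
   and C: "C \<ge> 0" and N: "N > 0"
  shows "h b - h a \<le> C * (W b - W a)^2 / N"
proof -
  define D where "D = W b - W a"
  have D0: "D \<ge> 0" using Wm ab unfolding D_def by (auto simp: mono_on_def)
  show ?thesis
  proof (cases "D = 0")
    case True
    then show ?thesis using inc[of a b] ab unfolding D_def by simp
  next
    case False
    with D0 have Dp: "D > 0" by simp
    define T where "T i = W a + real i * D / real N" for i
    have "\<exists>t. a \<le> t \<and> t \<le> b \<and> W t = T i" if "i \<le> N" for i
    proof (rule IVT'[OF _ _ ab Wc])
      show "W a \<le> T i" using D0 N by (simp add: T_def)
      have "real i * D / real N \<le> D" using that N D0
      proof -
        have "real i * D \<le> real N * D" using that D0 by (intro mult_right_mono) auto
        then show ?thesis using N by (simp add: divide_le_eq mult.commute)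
      qed
      then show "T i \<le> W b" unfolding T_def D_def by simp
    qed
    then obtain t where t: "\<And>i. i \<le> N \<Longrightarrow> a \<le> t i \<and> t i \<le> b \<and> W (t i) = T i"
      by metis
    have mono_t: "t i \<le> t (Suc i)" if "Suc i \<le> N" for i
    proof (rule ccontr)
      assume "\<not> t i \<le> t (Suc i)"
      then have "W (t (Suc i)) \<le> W (t i)"
        using Wm t[of i] t[of "Suc i"] that unfolding mono_on_def
        by (metis Suc_leD atLeastAtMost_iff nle_le)
      moreover have "T i < T (Suc i)" using Dp N by (simp add: T_def divide_strict_right_mono field_simps)
      ultimately show False using t[of i] t[of "Suc i"] that by auto
    qed
    have step: "h (t (Suc i)) - h (t i) \<le> C * (D / N)^2" if "Suc i \<le> N" for i
    proof -
      have "h (t (Suc i)) - h (t i) \<le> C * (W (t (Suc i)) - W (t i))^2"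
        using inc[of "t i" "t (Suc i)"] mono_t[OF that] t[of i] t[of "Suc i"] that by auto
      also have "W (t (Suc i)) - W (t i) = D / N"
        using t[of i] t[of "Suc i"] that by (simp add: T_def field_simps)
      finally show ?thesis .
    qed
    have "h (t N) - h (t 0) = (\<Sum>i<N. h (t (Suc i)) - h (t i))"
      using sum_lessThan_telescope[of "\<lambda>i. h (t i)" N] by simp
    also have "\<dots> \<le> (\<Sum>i<N. C * (D / N)^2)"
      by (rule sum_mono) (use step in auto)
    also have "\<dots> = C * D^2 / N" using N by (simp add: power2_eq_square field_simps)
    finally have 1: "h (t N) - h (t 0) \<le> C * D^2 / N" .
    have 2: "h b - h (t N) \<le> 0"
      using inc[of "t N" b] t[of N] by (simp add: T_def D_def N[THEN less_imp_neq, symmetric])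
    have 3: "h (t 0) - h a \<le> 0"
      using inc[of a "t 0"] t[of 0] by (simp add: T_def)
    show ?thesis using 1 2 3 unfolding D_def by simp
  qed
qed

lemma qil:
  fixes h W :: "real \<Rightarrow> real"
  assumes ab: "a \<le> b" and Wc: "continuous_on {a..b} W" and Wm: "mono_on {a..b} W"
   and inc: "\<And>x y. a \<le> x \<Longrightarrow> x \<le> y \<Longrightarrow> y \<le> b \<Longrightarrow> h y - h x \<le> C * (W y - W x)^2"
  shows "h b \<le> h a"
proof (rule ccontr)
  assume "\<not> h b \<le> h a"
  then have e: "h b - h a > 0" by simp
  define C' where "C' = max C 0"
  have inc': "h y - h x \<le> C' * (W y - W x)^2" if "a \<le> x" "x \<le> y" "y \<le> b" for x y
  proof -
    have "C * (W y - W x)^2 \<le> C' * (W y - W x)^2" unfolding C'_def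
      by (rule mult_right_mono) auto
    then show ?thesis using inc[OF that] by linarith
  qed
  obtain N :: nat where N: "N > C' * (W b - W a)^2 / (h b - h a)" using reals_Archimedean2 by blast
  have Np: "N > 0"
  proof -
    have "C' * (W b - W a)^2 / (h b - h a) \<ge> 0" using e unfolding C'_def by simp
    then show ?thesis using N by linarith
  qed
  have "h b - h a \<le> C' * (W b - W a)^2 / N"
    by (rule qil_aux[OF ab Wc Wm inc']) (use Np in \<open>auto simp: C'_def\<close>)
  also have "\<dots> < h b - h a" using N e Np by (simp add: divide_less_eq field_simps)
  finally show False by simp
qed


lemma pow_lip:
  fixes s t R :: real
  assumes "0 \<le> s" "s \<le> t" "t \<le> R"
  shows "t^n - s^n \<le> n * R^(n-1) * (t - s)"
proof (cases n)
  case 0 then show ?thesis by simp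
next
  case (Suc m)
  have "t^n - s^n = (t - s) * (\<Sum>p<Suc m. t^p * s^(m - p))"
    using diff_power_eq_sum[of t m s] Suc by simp
  also have "\<dots> \<le> (t - s) * (\<Sum>p<Suc m. R^m)"
  proof (rule mult_left_mono[OF sum_mono])
    fix p assume "p \<in> {..<Suc m}"
    then have p: "p \<le> m" by simp
    have "t^p * s^(m-p) \<le> R^p * R^(m-p)"
      using assms by (intro mult_mono power_mono) auto
    also have "\<dots> = R^m" using p by (simp add: power_add[symmetric])
    finally show "t^p * s^(m-p) \<le> R^m" .
  qed (use assms in auto)
  also have "\<dots> = n * R^(n-1) * (t - s)" using Suc by simp
  finally show ?thesis .
qed

lemma pow_low:
  fixes s t :: real
  assumes "0 \<le> s" "s \<le> t"
  shows "Suc n * s^n * (t - s) \<le> t^Suc n - s^Suc n"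
proof -
  have "Suc n * s^n * (t - s) = (t - s) * (\<Sum>p<Suc n. s^n)" by simp
  also have "\<dots> \<le> (t - s) * (\<Sum>p<Suc n. t^p * s^(n - p))"
  proof (rule mult_left_mono[OF sum_mono])
    fix p assume "p \<in> {..<Suc n}"
    then have p: "p \<le> n" by simp
    have "s^p * s^(n-p) \<le> t^p * s^(n-p)"
      using assms by (intro mult_right_mono power_mono) auto
    then show "s^n \<le> t^p * s^(n-p)" using p by (simp add: power_add[symmetric])
  qed (use assms in auto)
  also have "\<dots> = t^Suc n - s^Suc n" using diff_power_eq_sum[of t n s] by simp
  finally show ?thesis .
qed

lemma cont_mult_absint_real:
  fixes f g :: "real \<Rightarrow> real"
  assumes "continuous_on {a..b} g" "f absolutely_integrable_on {a..b}"
  shows "(\<lambda>t. g t * f t) absolutely_integrable_on {a..b}"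
proof (rule absolutely_integrable_bounded_measurable_product_real)
  show "g \<in> borel_measurable (lebesgue_on {a..b})"
    by (rule continuous_imp_measurable_on_sets_lebesgue) (use assms in auto)
  show "bounded (g ` {a..b})"
    by (rule compact_imp_bounded, rule compact_continuous_image) (use assms in auto)
qed (use assms in auto)

lemma cont_mult_absint:
  fixes f g :: "real \<Rightarrow> complex"
  assumes "continuous_on {a..b} g" "f absolutely_integrable_on {a..b}"
  shows "(\<lambda>t. g t * f t) absolutely_integrable_on {a..b}"
proof (rule absolutely_integrable_bounded_measurable_product[where h="(*)", OF bilinear_times])
  show "g \<in> borel_measurable (lebesgue_on {a..b})"
    by (rule continuous_imp_measurable_on_sets_lebesgue) (use assms in auto)
  show "bounded (g ` {a..b})"
    by (rule compact_imp_bounded, rule compact_continuous_image) (use assms in auto)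
qed (use assms in auto)

lemma ci_right:
  fixes a :: "real \<Rightarrow> real"
  assumes ux: "u \<le> x" and ai: "a integrable_on {u..x}" and a0: "\<And>t. 0 \<le> a t"
  shows "(\<lambda>t. a t * (integral {u..t} a) ^ n) integrable_on {u..x} \<and>
         integral {u..x} (\<lambda>t. a t * (integral {u..t} a) ^ n) \<le> (integral {u..x} a) ^ Suc n / Suc n"
proof -
  define W where "W t = integral {u..t} a" for t
  have Wc: "continuous_on {u..x} W" unfolding W_def by (rule indefinite_integral_continuous_1[OF ai])
  have aint: "a integrable_on {s..t}" if "u \<le> s" "t \<le> x" for s t
    by (rule integrable_subinterval_real[OF ai]) (use that in auto)
  have Wdiff: "W t - W s = integral {s..t} a" if "u \<le> s" "s \<le> t" "t \<le> x" for s t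
    using Henstock_Kurzweil_Integration.integral_combine[of u s t a] aint[of u t] that
    unfolding W_def by (simp add: algebra_simps)
  have Wmono: "W s \<le> W t" if "u \<le> s" "s \<le> t" "t \<le> x" for s t
    using Wdiff[OF that] Henstock_Kurzweil_Integration.integral_nonneg[OF aint[of s t]] a0 that by auto
  have W0: "0 \<le> W t" if "u \<le> t" "t \<le> x" for t
    using Wmono[of u t] that unfolding W_def by simp
  have Wm: "mono_on {u..x} W" by (auto intro!: mono_onI Wmono)
  have pi: "(\<lambda>t. a t * W t ^ n) integrable_on {u..x}"
  proof -
    have "(\<lambda>t. W t ^ n * a t) absolutely_integrable_on {u..x}"
      by (rule cont_mult_absint_real) (use Wc ai a0 in \<open>auto intro!: continuous_intros nonnegative_absolutely_integrable_1\<close>)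
    then show ?thesis using set_lebesgue_integral_eq_integral(1) by (simp add: mult.commute)
  qed
  have pint: "(\<lambda>t. a t * W t ^ n) integrable_on {s..t}" if "u \<le> s" "t \<le> x" for s t
    by (rule integrable_subinterval_real[OF pi]) (use that in auto)
  define h where "h t = integral {u..t} (\<lambda>t. a t * W t ^ n) - W t ^ Suc n / Suc n" for t
  have hdiff: "h t - h s \<le> (n * W x ^ (n - 1)) * (W t - W s)^2"
    if st: "u \<le> s" "s \<le> t" "t \<le> x" for s t
  proof -
    have "integral {u..t} (\<lambda>t. a t * W t ^ n) - integral {u..s} (\<lambda>t. a t * W t ^ n)
          = integral {s..t} (\<lambda>t. a t * W t ^ n)"
      using Henstock_Kurzweil_Integration.integral_combine[of u s t "\<lambda>t. a t * W t ^ n"] pint[of u t] st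
      by (simp add: algebra_simps)
    also have "\<dots> \<le> integral {s..t} (\<lambda>r. a r * W t ^ n)"
    proof (rule integral_le)
      show "(\<lambda>r. a r * W t ^ n) integrable_on {s..t}"
        using aint[of s t] st by (intro integrable_on_mult_left) auto
      show "a r * W r ^ n \<le> a r * W t ^ n" if "r \<in> {s..t}" for r
        using that st a0 W0 Wmono by (auto intro!: mult_left_mono power_mono)
    qed (use pint st in auto)
    also have "\<dots> = W t ^ n * (W t - W s)" using Wdiff[OF st] by simp
    finally have 1: "integral {u..t} (\<lambda>t. a t * W t ^ n) - integral {u..s} (\<lambda>t. a t * W t ^ n)
       \<le> W t ^ n * (W t - W s)" .
    have 2: "Suc n * W s ^ n * (W t - W s) \<le> W t ^ Suc n - W s ^ Suc n"
      by (rule pow_low) (use W0 Wmono st in auto)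
    have 3: "W t ^ n - W s ^ n \<le> n * W x ^ (n - 1) * (W t - W s)"
      by (rule pow_lip) (use W0 Wmono st in auto)
    have Wd0: "0 \<le> W t - W s" using Wmono st by auto
    have 4: "W s ^ n * (W t - W s) \<le> (W t ^ Suc n - W s ^ Suc n) / Suc n"
      using 2 by (simp add: field_simps del: of_nat_Suc)
    have "h t - h s = (integral {u..t} (\<lambda>t. a t * W t ^ n) - integral {u..s} (\<lambda>t. a t * W t ^ n))
        - (W t ^ Suc n - W s ^ Suc n) / Suc n"
      unfolding h_def by (simp add: diff_divide_distrib)
    also have "\<dots> \<le> W t ^ n * (W t - W s) - W s ^ n * (W t - W s)"
      using 1 4 by linarith
    also have "\<dots> = (W t ^ n - W s ^ n) * (W t - W s)" by (simp add: algebra_simps)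
    also have "\<dots> \<le> (n * W x ^ (n - 1) * (W t - W s)) * (W t - W s)"
      by (rule mult_right_mono[OF 3 Wd0])
    finally show ?thesis by (simp add: power2_eq_square mult.assoc)
  qed
  have "h x \<le> h u" by (rule qil[OF ux Wc Wm hdiff]) auto
  then have "integral {u..x} (\<lambda>t. a t * W t ^ n) \<le> W x ^ Suc n / Suc n"
    unfolding h_def W_def by simp
  with pi show ?thesis unfolding W_def by simp
qed


definition oint :: "(real \<Rightarrow> 'a::banach) \<Rightarrow> real \<Rightarrow> real \<Rightarrow> 'a" where
  "oint f u x = (if u \<le> x then integral {u..x} f else - integral {x..u} f)"

definition oabs :: "(real \<Rightarrow> real) \<Rightarrow> real \<Rightarrow> real \<Rightarrow> real" where
  "oabs f u x = (if u \<le> x then integral {u..x} f else integral {x..u} f)"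

lemma oint_self[simp]: "oint f u u = 0"
  by (simp add: oint_def)

lemma oint_diff:
  fixes f :: "real \<Rightarrow> 'a::banach"
  assumes fi: "\<And>a b. f integrable_on {a..b}" and xy: "x \<le> y"
  shows "oint f u y - oint f u x = integral {x..y} f"
proof -
  note comb = Henstock_Kurzweil_Integration.integral_combine
  consider "u \<le> x" | "x < u" "u \<le> y" | "y < u" using xy by linarith
  then show ?thesis
  proof cases
    case 1 then show ?thesis using comb[of u x y f] fi xy by (simp add: oint_def algebra_simps)
  next
    case 2 then show ?thesis using comb[of x u y f] fi xy by (simp add: oint_def algebra_simps)
  next
    case 3 then show ?thesis using comb[of x y u f] fi xy by (simp add: oint_def algebra_simps)
  qed
qed

lemma oint_local:
  fixes f :: "real \<Rightarrow> 'a::banach"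
  assumes fi: "\<And>a b. f integrable_on {a..b}" and "c \<le> y"
  shows "oint f u y = oint f u c + integral {c..y} f"
  using oint_diff[OF fi assms(2), of u] by (simp add: algebra_simps)

lemma oint_cont:
  fixes f :: "real \<Rightarrow> 'a::banach"
  assumes fi: "\<And>a b. f integrable_on {a..b}"
  shows "continuous_on S (\<lambda>x. oint f u x)"
proof (rule continuous_at_imp_continuous_on, intro ballI)
  fix x
  have "continuous_on {x-1..x+1} (\<lambda>y. oint f u (x-1) + integral {x-1..y} f)"
    by (intro continuous_intros indefinite_integral_continuous_1 fi)
  then have "continuous_on {x-1..x+1} (\<lambda>y. oint f u y)"
    by (rule continuous_on_eq) (use oint_local[OF fi] in auto)
  then show "isCont (\<lambda>x. oint f u x) x"
    by (rule continuous_on_interior) auto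
qed

lemma oint_deriv:
  fixes f :: "real \<Rightarrow> 'a::banach"
  assumes fc: "continuous_on UNIV f"
  shows "((\<lambda>x. oint f u x) has_vector_derivative f x) (at x)"
proof -
  have fi: "f integrable_on {a..b}" for a b
    by (rule integrable_continuous_interval) (use fc continuous_on_subset in blast)
  have "((\<lambda>y. integral {x-1..y} f) has_vector_derivative f x) (at x within {x-1..x+1})"
    by (rule integral_has_vector_derivative) (use fc continuous_on_subset in auto)
  then have "((\<lambda>y. integral {x-1..y} f) has_vector_derivative f x) (at x)"
    by (simp add: at_within_Icc_at)
  then have "((\<lambda>y. oint f u (x-1) + integral {x-1..y} f) has_vector_derivative f x) (at x)"
    by (intro derivative_eq_intros) auto
  then show ?thesis
  proof (rule has_vector_derivative_transform_within_open[where S="{x-1<..<x+1}"])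
    fix y assume "y \<in> {x-1<..<x+1}"
    then show "oint f u (x - 1) + integral {x - 1..y} f = oint f u y"
      using oint_local[OF fi, of "x-1" y u] by simp
  qed auto
qed

lemma oint_bound:
  fixes f :: "real \<Rightarrow> 'a::euclidean_space"
  assumes fi: "\<And>a b. f integrable_on {a..b}" and gi: "\<And>a b. g integrable_on {a..b}"
    and le: "\<And>t. norm (f t) \<le> g t"
  shows "norm (oint f u x) \<le> oabs g u x"
  unfolding oint_def oabs_def
  using integral_norm_bound_integral[OF fi gi le] by auto

lemma oabs_mono:
  assumes fi: "\<And>a b. f integrable_on {a..b}" and gi: "\<And>a b. g integrable_on {a..b}"
    and le: "\<And>t. f t \<le> g t"
  shows "oabs f u x \<le> oabs g u x"
  unfolding oabs_def using integral_le[OF fi gi] le by auto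

lemma oabs_add:
  assumes fi: "\<And>a b. f integrable_on {a..b}" and gi: "\<And>a b. g integrable_on {a..b}"
  shows "oabs (\<lambda>t. f t + g t) u x = oabs f u x + oabs g u x"
  unfolding oabs_def using Henstock_Kurzweil_Integration.integral_add[OF fi gi] by auto

lemma oabs_cmult:
  shows "oabs (\<lambda>t. c * f t) u x = c * oabs f u x"
  unfolding oabs_def by auto

lemma oabs_eq_abs_oint:
  assumes fi: "\<And>a b. f integrable_on {a..b}" and f0: "\<And>t. 0 \<le> f t"
  shows "oabs f u x = \<bar>oint f u x\<bar>"
  unfolding oabs_def oint_def
  using Henstock_Kurzweil_Integration.integral_nonneg[OF fi] f0 by auto

lemma oabs_nonneg:
  assumes fi: "\<And>a b. f integrable_on {a..b}" and f0: "\<And>t. 0 \<le> f t"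
  shows "0 \<le> oabs f u x"
  unfolding oabs_def
  using Henstock_Kurzweil_Integration.integral_nonneg[OF fi] f0 by auto

lemma oabs_cont:
  assumes fi: "\<And>a b. f integrable_on {a..b}" and f0: "\<And>t. 0 \<le> f t"
  shows "continuous_on S (\<lambda>x. oabs f u x)"
  unfolding oabs_eq_abs_oint[OF fi f0]
  by (intro continuous_intros oint_cont fi)

lemma oabs_le_interval:
  assumes fi: "\<And>a b. f integrable_on {a..b}" and f0: "\<And>t. 0 \<le> f t"
    and "u \<in> {c..d}" "x \<in> {c..d}"
  shows "oabs f u x \<le> integral {c..d} f"
proof -
  have "integral {s..t} f \<le> integral {c..d} f" if "c \<le> s" "s \<le> t" "t \<le> d" for s t
    by (rule integral_subset_le) (use that fi f0 in auto)
  then show ?thesis using assms(3,4) unfolding oabs_def by auto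
qed

lemma oint_sum:
  fixes f :: "nat \<Rightarrow> real \<Rightarrow> 'a::banach"
  assumes fi: "\<And>i a b. f i integrable_on {a..b}"
  shows "oint (\<lambda>t. \<Sum>i<N. f i t) u x = (\<Sum>i<N. oint (f i) u x)"
  unfolding oint_def using fi by (auto simp: integral_sum sum_negf)

lemma oint_minus:
  fixes f :: "real \<Rightarrow> 'a::banach"
  assumes fi: "\<And>a b. f integrable_on {a..b}" and gi: "\<And>a b. g integrable_on {a..b}"
  shows "oint (\<lambda>t. f t - g t) u x = oint f u x - oint g u x"
  unfolding oint_def using fi gi by (auto simp: Henstock_Kurzweil_Integration.integral_diff)

lemma ci_left:
  fixes a :: "real \<Rightarrow> real"
  assumes xu: "x \<le> u" and ai: "a integrable_on {x..u}" and a0: "\<And>t. 0 \<le> a t"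
  shows "(\<lambda>t. a t * (integral {t..u} a) ^ n) integrable_on {x..u} \<and>
         integral {x..u} (\<lambda>t. a t * (integral {t..u} a) ^ n) \<le> (integral {x..u} a) ^ Suc n / Suc n"
proof -
  have ai': "(\<lambda>t. a (-t)) integrable_on {-u..-x}" using ai by simp
  have R: "(\<lambda>s. a (-s) * (integral {-u..s} (\<lambda>t. a (-t))) ^ n) integrable_on {-u..-x} \<and>
         integral {-u..-x} (\<lambda>s. a (-s) * (integral {-u..s} (\<lambda>t. a (-t))) ^ n)
            \<le> (integral {-u..-x} (\<lambda>t. a (-t))) ^ Suc n / Suc n"
    by (rule ci_right) (use xu ai' a0 in auto)
  have e1: "integral {-u..s} (\<lambda>t. a (-t)) = integral {-s..u} a" for s
    using Henstock_Kurzweil_Integration.integral_reflect_real[of u "-s" a] by simp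
  define F where "F t = a t * (integral {t..u} a) ^ n" for t
  have e2: "(\<lambda>s. a (-s) * (integral {-u..s} (\<lambda>t. a (-t))) ^ n) = (\<lambda>s. F (-s))"
    unfolding F_def e1 by simp
  from R[unfolded e2] have "(\<lambda>s. F (-s)) integrable_on {-u..-x}"
    "integral {-u..-x} (\<lambda>s. F (-s)) \<le> (integral {x..u} a) ^ Suc n / Suc n"
    using Henstock_Kurzweil_Integration.integral_reflect_real[of u x a] by auto
  then show ?thesis unfolding F_def[symmetric]
    using integrable_reflect_real[where f=F and a=x and b=u] Henstock_Kurzweil_Integration.integral_reflect_real[of u x F] by auto
qed

lemma ci_oabs:
  fixes a :: "real \<Rightarrow> real"
  assumes ai: "\<And>c d. a integrable_on {c..d}" and a0: "\<And>t. 0 \<le> a t"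
  shows "oabs (\<lambda>t. a t * (oabs a u t) ^ n) u x \<le> (oabs a u x) ^ Suc n / Suc n"
proof (cases "u \<le> x")
  case True
  have "integral {u..x} (\<lambda>t. a t * (oabs a u t) ^ n) = integral {u..x} (\<lambda>t. a t * (integral {u..t} a) ^ n)"
    by (rule integral_cong) (auto simp: oabs_def)
  then show ?thesis using ci_right[OF True ai a0, of n] True by (simp add: oabs_def)
next
  case False
  have "integral {x..u} (\<lambda>t. a t * (oabs a u t) ^ n) = integral {x..u} (\<lambda>t. a t * (integral {t..u} a) ^ n)"
    by (rule integral_cong) (auto simp: oabs_def)
  then show ?thesis using ci_left[of x u a n] ai a0 False by (simp add: oabs_def)
qed


lemma oint_bound_local:
  fixes f :: "real \<Rightarrow> 'a::euclidean_space"
  assumes fi: "\<And>a b. f integrable_on {a..b}" and gi: "\<And>a b. g integrable_on {a..b}"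
    and le: "\<And>t. t \<in> {min u x..max u x} \<Longrightarrow> norm (f t) \<le> g t"
  shows "norm (oint f u x) \<le> oabs g u x"
  unfolding oint_def oabs_def
  using integral_norm_bound_integral[OF fi gi, of u x] integral_norm_bound_integral[OF fi gi, of x u] le
  by auto

lemma cont_integrable:
  fixes f :: "real \<Rightarrow> 'a::banach"
  shows "continuous_on UNIV f \<Longrightarrow> f integrable_on {a..b}"
  by (rule integrable_continuous_interval) (use continuous_on_subset in blast)

locale pot =
  fixes V :: "real \<Rightarrow> complex"
  assumes loc_int: "\<And>a b. V absolutely_integrable_on {a..b}"
begin

definition aw :: "complex \<Rightarrow> real \<Rightarrow> real" where
  "aw lam t = 1 + cmod lam + cmod (V t)"

lemma aw_ge1: "1 \<le> aw lam t" and aw_nonneg: "0 \<le> aw lam t"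
  by (auto simp: aw_def)

lemma aw_int: "aw lam integrable_on {a..b}"
proof -
  have "(\<lambda>t. 1 + cmod lam) integrable_on {a..b}" by (rule integrable_const_ivl)
  moreover have "(\<lambda>t. cmod (V t)) integrable_on {a..b}"
    using loc_int absolutely_integrable_on_def by blast
  ultimately have "(\<lambda>t. (1 + cmod lam) + cmod (V t)) integrable_on {a..b}" by (rule Henstock_Kurzweil_Integration.integrable_add)
  then show ?thesis by (simp add: aw_def[abs_def] add.assoc)
qed

lemma aw_absint: "aw lam absolutely_integrable_on {a..b}"
  by (rule nonnegative_absolutely_integrable_1[OF aw_int]) (simp add: aw_nonneg)

lemma q_norm: "cmod (V t - lam) \<le> aw lam t"
  unfolding aw_def using norm_triangle_ineq4[of "V t" lam] by simp

lemma q_int: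
  assumes g: "continuous_on UNIV g"
  shows "(\<lambda>t. (V t - lam) * g t) integrable_on {a..b}"
proof -
  have "(\<lambda>t. g t * V t) absolutely_integrable_on {a..b}"
    by (rule cont_mult_absint) (use g loc_int continuous_on_subset in blast)+
  then have 1: "(\<lambda>t. g t * V t) integrable_on {a..b}"
    using absolutely_integrable_on_def by blast
  have 2: "(\<lambda>t. lam * g t) integrable_on {a..b}"
    by (rule cont_integrable) (intro continuous_intros g)
  have "(\<lambda>t. g t * V t - lam * g t) integrable_on {a..b}" by (rule Henstock_Kurzweil_Integration.integrable_diff[OF 1 2])
  then show ?thesis by (simp add: algebra_simps)
qed

lemma aw_mult_int:
  assumes g: "continuous_on UNIV g"
  shows "(\<lambda>t. aw lam t * g t) integrable_on {a..b}"
proof -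
  have "(\<lambda>t. g t * aw lam t) absolutely_integrable_on {a..b}"
    by (rule cont_mult_absint_real) (use g aw_absint continuous_on_subset in blast)+
  then have "(\<lambda>t. g t * aw lam t) integrable_on {a..b}" by (simp add: absolutely_integrable_on_def)
  then show ?thesis by (simp add: mult.commute)
qed

fun pic :: "complex \<Rightarrow> real \<Rightarrow> complex \<Rightarrow> complex \<Rightarrow> nat \<Rightarrow> (real \<Rightarrow> complex) \<times> (real \<Rightarrow> complex)" where
  "pic lam u al be 0 = (\<lambda>x. al, \<lambda>x. be)"
| "pic lam u al be (Suc n) = (\<lambda>x. oint (snd (pic lam u al be n)) u x,
                              \<lambda>x. oint (\<lambda>t. (V t - lam) * fst (pic lam u al be n) t) u x)"

lemma pic_cont: "continuous_on UNIV (fst (pic lam u al be n)) \<and> continuous_on UNIV (snd (pic lam u al be n))"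
proof (induction n)
  case 0 then show ?case by simp
next
  case (Suc n)
  then show ?case
    by (auto intro!: oint_cont cont_integrable q_int)
qed

lemma pic_bound:
  "norm (fst (pic lam u al be n) x) + norm (snd (pic lam u al be n) x)
     \<le> (cmod al + cmod be) * (oabs (aw lam) u x) ^ n / fact n"
proof (induction n arbitrary: x)
  case 0 then show ?case by simp
next
  case (Suc n)
  define P where "P = fst (pic lam u al be n)"
  define D where "D = snd (pic lam u al be n)"
  define B where "B = cmod al + cmod be"
  define Om where "Om x = oabs (aw lam) u x" for x
  have Pc: "continuous_on UNIV P" and Dc: "continuous_on UNIV D" using pic_cont unfolding P_def D_def by auto
  have Omc: "continuous_on UNIV Om" unfolding Om_def by (rule oabs_cont[OF aw_int aw_nonneg])
  have IH: "norm (P t) + norm (D t) \<le> B * Om t ^ n / fact n" for t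
    using Suc.IH unfolding P_def D_def B_def Om_def .
  have i1: "(\<lambda>t. norm (D t)) integrable_on {a..b}" for a b
    by (rule cont_integrable) (intro continuous_intros Dc)
  have i2: "(\<lambda>t. aw lam t * norm (P t)) integrable_on {a..b}" for a b
    by (rule aw_mult_int) (intro continuous_intros Pc)
  have i3: "(\<lambda>t. aw lam t * (norm (P t) + norm (D t))) integrable_on {a..b}" for a b
    by (rule aw_mult_int) (intro continuous_intros Pc Dc)
  have i4: "(\<lambda>t. aw lam t * (B * Om t ^ n / fact n)) integrable_on {a..b}" for a b
    by (rule aw_mult_int) (intro continuous_intros Omc, simp)
  have i5: "(\<lambda>t. aw lam t * Om t ^ n) integrable_on {a..b}" for a b
    by (rule aw_mult_int) (intro continuous_intros Omc)
  have e1: "fst (pic lam u al be (Suc n)) x = oint D u x" by (simp add: D_def)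
  have e2: "snd (pic lam u al be (Suc n)) x = oint (\<lambda>t. (V t - lam) * P t) u x" by (simp add: P_def)
  have "norm (fst (pic lam u al be (Suc n)) x) \<le> oabs (\<lambda>t. norm (D t)) u x"
    unfolding e1 by (rule oint_bound[OF cont_integrable[OF Dc] i1]) simp
  moreover have "norm (snd (pic lam u al be (Suc n)) x) \<le> oabs (\<lambda>t. aw lam t * norm (P t)) u x"
    unfolding e2
    by (rule oint_bound[OF q_int[OF Pc] i2])
       (simp add: norm_mult mult_right_mono q_norm)
  ultimately have "norm (fst (pic lam u al be (Suc n)) x) + norm (snd (pic lam u al be (Suc n)) x)
      \<le> oabs (\<lambda>t. norm (D t)) u x + oabs (\<lambda>t. aw lam t * norm (P t)) u x" by simp
  also have "\<dots> = oabs (\<lambda>t. norm (D t) + aw lam t * norm (P t)) u x"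
    by (rule oabs_add[OF i1 i2, symmetric])
  also have "\<dots> \<le> oabs (\<lambda>t. aw lam t * (norm (P t) + norm (D t))) u x"
  proof (rule oabs_mono)
    show "(\<lambda>t. norm (D t) + aw lam t * norm (P t)) integrable_on {a..b}" for a b
      by (rule Henstock_Kurzweil_Integration.integrable_add[OF i1 i2])
    show "norm (D t) + aw lam t * norm (P t) \<le> aw lam t * (norm (P t) + norm (D t))" for t
      using aw_ge1[of lam t] mult_right_mono[of 1 "aw lam t" "norm (D t)"]
      by (simp add: algebra_simps)
  qed (rule i3)
  also have "\<dots> \<le> oabs (\<lambda>t. aw lam t * (B * Om t ^ n / fact n)) u x"
    by (rule oabs_mono[OF i3 i4]) (rule mult_left_mono[OF IH aw_nonneg])
  also have "\<dots> = (B / fact n) * oabs (\<lambda>t. aw lam t * Om t ^ n) u x"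
    using oabs_cmult[of "B / fact n" "\<lambda>t. aw lam t * Om t ^ n" u x] by (simp add: algebra_simps)
  also have "\<dots> \<le> (B / fact n) * (Om x ^ Suc n / Suc n)"
    by (rule mult_left_mono) (use ci_oabs[OF aw_int aw_nonneg, where u=u and n=n and x=x] in \<open>auto simp: Om_def B_def\<close>)
  also have "\<dots> = B * Om x ^ Suc n / fact (Suc n)" by (simp add: field_simps)
  finally show ?case unfolding B_def Om_def .
qed

end


lemma oint_tendsto:
  fixes G :: "nat \<Rightarrow> real \<Rightarrow> complex"
  assumes Gi: "\<And>N a b. G N integrable_on {a..b}" and gi: "\<And>a b. g integrable_on {a..b}"
   and wi: "\<And>a b. w integrable_on {a..b}" and w0: "\<And>t. 0 \<le> w t"
   and ul: "\<And>\<epsilon>. \<epsilon> > 0 \<Longrightarrow> eventually (\<lambda>N. \<forall>t\<in>{min u x..max u x}. norm (G N t - g t) \<le> \<epsilon> * w t) sequentially"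
  shows "(\<lambda>N. oint (G N) u x) \<longlonglongrightarrow> oint g u x"
proof (rule tendstoI)
  fix e :: real assume e: "e > 0"
  define Q where "Q = oabs w u x"
  have Q0: "0 \<le> Q" unfolding Q_def by (rule oabs_nonneg[OF wi w0])
  define \<epsilon> where "\<epsilon> = e / (Q + 1)"
  have ep: "\<epsilon> > 0" using e Q0 by (simp add: \<epsilon>_def)
  show "\<forall>\<^sub>F N in sequentially. dist (oint (G N) u x) (oint g u x) < e"
    using ul[OF ep]
  proof eventually_elim
    case (elim N)
    have wi': "(\<lambda>t. \<epsilon> * w t) integrable_on {a..b}" for a b
      by (rule integrable_on_mult_right[OF wi])
    have "dist (oint (G N) u x) (oint g u x) = norm (oint (\<lambda>t. G N t - g t) u x)"
      by (simp add: dist_norm oint_minus[OF Gi gi])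
    also have "\<dots> \<le> oabs (\<lambda>t. \<epsilon> * w t) u x"
      by (rule oint_bound_local[OF _ wi']) (use elim Gi gi in \<open>auto intro: Henstock_Kurzweil_Integration.integrable_diff\<close>)
    also have "\<dots> = \<epsilon> * Q" by (simp add: oabs_cmult Q_def)
    also have "\<dots> < e" using e Q0 unfolding \<epsilon>_def by (simp add: field_simps)
    finally show ?case .
  qed
qed

context pot
begin

lemma existence: "\<exists>\<psi> d. is_solution V lam \<psi> d \<and> \<psi> u = al \<and> d u = be"
proof -
  define P where "P n = fst (pic lam u al be n)" for n
  define D where "D n = snd (pic lam u al be n)" for n
  define B where "B = cmod al + cmod be"
  have Pc: "continuous_on UNIV (P n)" and Dc: "continuous_on UNIV (D n)" for n
    using pic_cont unfolding P_def D_def by auto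
  have B0: "0 \<le> B" unfolding B_def by simp
  have bnd: "norm (P n x) \<le> B * K^n / fact n \<and> norm (D n x) \<le> B * K^n / fact n"
    if "x \<in> {c..d}" "u \<in> {c..d}" "K = integral {c..d} (aw lam)" for n x c d K
  proof -
    have O0: "0 \<le> oabs (aw lam) u x" by (rule oabs_nonneg[OF aw_int aw_nonneg])
    have "oabs (aw lam) u x \<le> K" using oabs_le_interval[OF aw_int aw_nonneg that(2,1)] that(3) by simp
    then have "oabs (aw lam) u x ^ n \<le> K ^ n" by (rule power_mono[OF _ O0])
    then have "B * oabs (aw lam) u x ^ n / fact n \<le> B * K^n / fact n"
      by (intro divide_right_mono mult_left_mono B0) auto
    with pic_bound[of lam u al be n x] show ?thesis unfolding P_def D_def B_def[symmetric]
      by (smt (verit) norm_ge_zero)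
  qed
  have summ: "summable (\<lambda>n. B * K^n / fact n)" for K :: real
    using summable_mult[OF summable_exp[of K], of B] by (simp add: field_simps)
  have ULP: "uniform_limit {c..d} (\<lambda>N x. \<Sum>i<N. P i x) (\<lambda>x. \<Sum>i. P i x) sequentially"
    if "u \<in> {c..d}" for c d
    by (rule Weierstrass_m_test[OF _ summ[of "integral {c..d} (aw lam)"]]) (use bnd that in blast)
  have ULD: "uniform_limit {c..d} (\<lambda>N x. \<Sum>i<N. D i x) (\<lambda>x. \<Sum>i. D i x) sequentially"
    if "u \<in> {c..d}" for c d
    by (rule Weierstrass_m_test[OF _ summ[of "integral {c..d} (aw lam)"]]) (use bnd that in blast)
  define \<psi> where "\<psi> x = (\<Sum>i. P i x)" for x
  define dd where "dd x = (\<Sum>i. D i x)" for x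
  have sumP: "summable (\<lambda>i. P i x)" for x
  proof (rule summable_comparison_test[OF _ summ[of "integral {min u x..max u x} (aw lam)"]])
    show "\<exists>N. \<forall>n\<ge>N. norm (P n x) \<le> B * integral {min u x..max u x} (aw lam) ^ n / fact n"
      using bnd[of x "min u x" "max u x"] by auto
  qed
  have sumD: "summable (\<lambda>i. D i x)" for x
  proof (rule summable_comparison_test[OF _ summ[of "integral {min u x..max u x} (aw lam)"]])
    show "\<exists>N. \<forall>n\<ge>N. norm (D n x) \<le> B * integral {min u x..max u x} (aw lam) ^ n / fact n"
      using bnd[of x "min u x" "max u x"] by auto
  qed
  have psic: "continuous_on UNIV \<psi>"
  proof (rule continuous_at_imp_continuous_on, intro ballI)
    fix x :: real
    have "continuous_on {min u x - 1..max u x + 1} \<psi>"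
      unfolding \<psi>_def
      by (rule uniform_limit_theorem[OF _ ULP]) (auto intro!: always_eventually continuous_on_sum continuous_on_subset[OF Pc])
    then show "isCont \<psi> x" by (rule continuous_on_interior) auto
  qed
  have qpsi_int: "(\<lambda>t. (V t - lam) * \<psi> t) integrable_on {a..b}" for a b
    by (rule q_int[OF psic])
  have E1: "\<psi> x = al + oint dd u x" for x
  proof -
    have "(\<lambda>N. oint (\<lambda>t. \<Sum>i<N. D i t) u x) \<longlonglongrightarrow> oint dd u x"
    proof (rule oint_tendsto[OF _ _ aw_int aw_nonneg])
      show "(\<lambda>t. \<Sum>i<N. D i t) integrable_on {a..b}" for N a b
        by (rule cont_integrable) (intro continuous_on_sum Dc)
      show "dd integrable_on {a..b}" for a b
      proof (rule cont_integrable, rule continuous_at_imp_continuous_on, intro ballI)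
        fix y :: real
        have "continuous_on {min u y - 1..max u y + 1} dd"
          unfolding dd_def
          by (rule uniform_limit_theorem[OF _ ULD]) (auto intro!: always_eventually continuous_on_sum continuous_on_subset[OF Dc])
        then show "isCont dd y" by (rule continuous_on_interior) auto
      qed
      fix \<epsilon> :: real assume ep: "\<epsilon> > 0"
      have "\<forall>\<^sub>F N in sequentially. \<forall>t\<in>{min u x..max u x}. dist (\<Sum>i<N. D i t) (dd t) < \<epsilon>"
        using uniform_limitD[OF ULD ep, of "min u x" "max u x"] unfolding dd_def by auto
      then show "\<forall>\<^sub>F N in sequentially. \<forall>t\<in>{min u x..max u x}. norm ((\<Sum>i<N. D i t) - dd t) \<le> \<epsilon> * aw lam t"
      proof eventually_elim
        case (elim N)
        show ?case
        proof
          fix t assume "t \<in> {min u x..max u x}"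
          then have "norm ((\<Sum>i<N. D i t) - dd t) < \<epsilon>" using elim by (auto simp: dist_norm)
          then have "norm ((\<Sum>i<N. D i t) - dd t) \<le> \<epsilon>" by simp
          also have "\<epsilon> \<le> \<epsilon> * aw lam t" using ep aw_ge1[of lam t] by simp
          finally show "norm ((\<Sum>i<N. D i t) - dd t) \<le> \<epsilon> * aw lam t" .
        qed
      qed
    qed
    moreover have "oint (\<lambda>t. \<Sum>i<N. D i t) u x = (\<Sum>i<N. P (Suc i) x)" for N
      by (subst oint_sum) (auto intro: cont_integrable Dc[unfolded D_def] simp: P_def D_def)
    ultimately have "(\<lambda>i. P (Suc i) x) sums oint dd u x" unfolding sums_def by simp
    then have "(\<lambda>i. P i x) sums (oint dd u x + P 0 x)"
      using sums_Suc_iff[of "\<lambda>i. P i x" "oint dd u x"] by blast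
    then show ?thesis unfolding \<psi>_def by (simp add: sums_iff P_def)
  qed
  have E2: "dd x = be + oint (\<lambda>t. (V t - lam) * \<psi> t) u x" for x
  proof -
    have "(\<lambda>N. oint (\<lambda>t. (V t - lam) * (\<Sum>i<N. P i t)) u x) \<longlonglongrightarrow> oint (\<lambda>t. (V t - lam) * \<psi> t) u x"
    proof (rule oint_tendsto[OF _ qpsi_int aw_int aw_nonneg])
      show "(\<lambda>t. (V t - lam) * (\<Sum>i<N. P i t)) integrable_on {a..b}" for N a b
        by (rule q_int) (intro continuous_on_sum Pc)
      fix \<epsilon> :: real assume ep: "\<epsilon> > 0"
      have "\<forall>\<^sub>F N in sequentially. \<forall>t\<in>{min u x..max u x}. dist (\<Sum>i<N. P i t) (\<psi> t) < \<epsilon>"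
        using uniform_limitD[OF ULP ep, of "min u x" "max u x"] unfolding \<psi>_def by auto
      then show "\<forall>\<^sub>F N in sequentially. \<forall>t\<in>{min u x..max u x}.
          norm ((V t - lam) * (\<Sum>i<N. P i t) - (V t - lam) * \<psi> t) \<le> \<epsilon> * aw lam t"
      proof eventually_elim
        case (elim N)
        show ?case
        proof
          fix t assume "t \<in> {min u x..max u x}"
          then have "norm ((\<Sum>i<N. P i t) - \<psi> t) < \<epsilon>" using elim by (auto simp: dist_norm)
          then have 1: "norm ((\<Sum>i<N. P i t) - \<psi> t) \<le> \<epsilon>" by simp
          have "norm ((V t - lam) * (\<Sum>i<N. P i t) - (V t - lam) * \<psi> t)
              = norm (V t - lam) * norm ((\<Sum>i<N. P i t) - \<psi> t)"
            by (simp add: norm_mult[symmetric] algebra_simps)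
          also have "\<dots> \<le> aw lam t * \<epsilon>" by (rule mult_mono[OF q_norm 1 aw_nonneg]) simp
          finally show "norm ((V t - lam) * (\<Sum>i<N. P i t) - (V t - lam) * \<psi> t) \<le> \<epsilon> * aw lam t"
            by (simp add: mult.commute)
        qed
      qed
    qed
    moreover have "oint (\<lambda>t. (V t - lam) * (\<Sum>i<N. P i t)) u x = (\<Sum>i<N. D (Suc i) x)" for N
      unfolding sum_distrib_left
      by (subst oint_sum) (auto intro: q_int Pc[unfolded P_def] simp: P_def D_def)
    ultimately have "(\<lambda>i. D (Suc i) x) sums oint (\<lambda>t. (V t - lam) * \<psi> t) u x" unfolding sums_def by simp
    then have "(\<lambda>i. D i x) sums (oint (\<lambda>t. (V t - lam) * \<psi> t) u x + D 0 x)"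
      using sums_Suc_iff[of "\<lambda>i. D i x" "oint (\<lambda>t. (V t - lam) * \<psi> t) u x"] by blast
    then show ?thesis unfolding dd_def by (simp add: sums_iff D_def)
  qed
  have ddc: "continuous_on UNIV dd"
  proof -
    have "continuous_on UNIV (\<lambda>x. be + oint (\<lambda>t. (V t - lam) * \<psi> t) u x)"
      by (intro continuous_intros oint_cont qpsi_int)
    then show ?thesis using E2 by (simp add: fun_eq_iff[symmetric] E2[abs_def])
  qed
  have sol: "is_solution V lam \<psi> dd"
    unfolding is_solution_def
  proof (intro conjI allI impI)
    fix x
    have "((\<lambda>x. al + oint dd u x) has_vector_derivative dd x) (at x)"
      using oint_deriv[OF ddc, of u x] by (intro derivative_eq_intros) auto
    then show "(\<psi> has_vector_derivative dd x) (at x)"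
      using E1 by (simp add: E1[abs_def])
  next
    fix a b :: real assume ab: "a \<le> b"
    have "dd b - dd a = integral {a..b} (\<lambda>t. (V t - lam) * \<psi> t)"
      using oint_diff[OF qpsi_int ab, of u] E2 by simp
    then show "((\<lambda>t. (V t - lam) * \<psi> t) has_integral dd b - dd a) {a..b}"
      using qpsi_int[of a b] by (simp add: integrable_integral)
  qed
  show ?thesis
    by (rule exI[of _ \<psi>], rule exI[of _ dd]) (use sol E1[of u] E2[of u] in simp)
qed

end


lemma norm_bound_const:
  fixes f :: "real \<Rightarrow> 'a::real_normed_vector"
  assumes "(f has_integral i) {x..y}" "x \<le> y" "0 \<le> B" "\<And>t. t \<in> {x..y} \<Longrightarrow> norm (f t) \<le> B"
  shows "norm i \<le> B * (y - x)"
  using has_integral_bound[of B f i x y] assms by (simp add: content_real)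

context pot
begin

lemma sol_cont: "is_solution V lam \<psi> d \<Longrightarrow> continuous_on S \<psi>"
  unfolding is_solution_def
  by (meson continuous_at_imp_continuous_on continuous_on_eq_continuous_within has_vector_derivative_continuous)

lemma sol_dint: "is_solution V lam \<psi> d \<Longrightarrow> x \<le> y \<Longrightarrow> ((\<lambda>t. (V t - lam) * \<psi> t) has_integral (d y - d x)) {x..y}"
  unfolding is_solution_def by blast

lemma sol_psiint: "is_solution V lam \<psi> d \<Longrightarrow> x \<le> y \<Longrightarrow> (d has_integral (\<psi> y - \<psi> x)) {x..y}"
  unfolding is_solution_def
  by (intro fundamental_theorem_of_calculus) (auto intro: has_vector_derivative_at_within)

lemma wr_est:
  assumes s1: "is_solution V lam \<psi>1 d1" and s2: "is_solution V lam \<psi>2 d2"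
    and M: "\<And>t. t \<in> {a..b} \<Longrightarrow> norm (\<psi>1 t) \<le> M \<and> norm (\<psi>2 t) \<le> M"
    and M': "\<And>t. t \<in> {a..b} \<Longrightarrow> norm (d1 t) \<le> M' \<and> norm (d2 t) \<le> M'"
    and M0: "0 \<le> M" and M'0: "0 \<le> M'"
    and xy: "a \<le> x" "x \<le> y" "y \<le> b"
  shows "norm ((\<psi>1 y * d2 y - d1 y * \<psi>2 y) - (\<psi>1 x * d2 x - d1 x * \<psi>2 x))
          \<le> 4 * M * M' * (integral {x..y} (aw lam))^2"
proof -
  define om where "om = integral {x..y} (aw lam)"
  have om_sub: "integral {s..t} (aw lam) \<le> om" if "x \<le> s" "s \<le> t" "t \<le> y" for s t
    unfolding om_def by (rule integral_subset_le) (use that aw_int aw_nonneg in auto)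
  have len: "t - s \<le> integral {s..t} (aw lam)" if "s \<le> t" for s t
  proof -
    have "integral {s..t} (\<lambda>_. 1::real) \<le> integral {s..t} (aw lam)"
      by (rule integral_le) (use aw_int aw_ge1 in auto)
    then show ?thesis using that by (simp add: content_real)
  qed
  have om0: "0 \<le> om" using len[of x y] xy unfolding om_def by simp
  have dpsi: "norm (\<psi>1 t - \<psi>1 x) \<le> M' * om \<and> norm (\<psi>2 t - \<psi>2 x) \<le> M' * om" if t: "x \<le> t" "t \<le> y" for t
  proof -
    have "norm (\<psi>1 t - \<psi>1 x) \<le> M' * (t - x)"
      by (rule norm_bound_const[OF sol_psiint[OF s1 t(1)] t(1) M'0]) (use M' xy t in auto)
    moreover have "norm (\<psi>2 t - \<psi>2 x) \<le> M' * (t - x)"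
      by (rule norm_bound_const[OF sol_psiint[OF s2 t(1)] t(1) M'0]) (use M' xy t in auto)
    moreover have "M' * (t - x) \<le> M' * om"
      using len[OF t(1)] om_sub[of x t] t M'0 by (intro mult_left_mono) auto
    ultimately show ?thesis by linarith
  qed
  have dd: "norm (d1 y - d1 t) \<le> M * om \<and> norm (d2 y - d2 t) \<le> M * om" if t: "x \<le> t" "t \<le> y" for t
  proof -
    have b: "norm (d y - d t) \<le> M * om" if s: "is_solution V lam \<psi> d" and Mp: "\<And>r. r \<in> {a..b} \<Longrightarrow> norm (\<psi> r) \<le> M" for \<psi> d
    proof -
      have "norm (d y - d t) = norm (integral {t..y} (\<lambda>r. (V r - lam) * \<psi> r))"
        using sol_dint[OF s t(2)] by (simp add: integral_unique)
      also have "\<dots> \<le> integral {t..y} (\<lambda>r. M * aw lam r)"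
      proof (rule integral_norm_bound_integral)
        show "(\<lambda>r. (V r - lam) * \<psi> r) integrable_on {t..y}" using sol_dint[OF s t(2)] by blast
        show "(\<lambda>r. M * aw lam r) integrable_on {t..y}" by (rule integrable_on_mult_right[OF aw_int])
        fix r assume "r \<in> {t..y}"
        then have "norm (\<psi> r) \<le> M" using Mp t xy by auto
        then show "norm ((V r - lam) * \<psi> r) \<le> M * aw lam r"
          using q_norm[of r lam] M0 by (simp add: norm_mult mult.commute mult_mono)
      qed
      also have "\<dots> = M * integral {t..y} (aw lam)" by simp
      also have "\<dots> \<le> M * om" using om_sub[of t y] t M0 by (intro mult_left_mono) auto
      finally show ?thesis .
    qed
    show ?thesis using b[OF s1] b[OF s2] M by auto
  qed
  define J1 where "J1 = d1 y - d1 x"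
  define J2 where "J2 = d2 y - d2 x"
  define K1 where "K1 = \<psi>1 y - \<psi>1 x"
  define K2 where "K2 = \<psi>2 y - \<psi>2 x"
  have decomp: "(\<psi>1 y * d2 y - d1 y * \<psi>2 y) - (\<psi>1 x * d2 x - d1 x * \<psi>2 x)
      = (\<psi>1 x * J2 - \<psi>2 x * J1) + (K1 * d2 y - K2 * d1 y)"
    unfolding J1_def J2_def K1_def K2_def by (simp add: algebra_simps)
  have first: "((\<lambda>t. (V t - lam) * (\<psi>1 x * (\<psi>2 t - \<psi>2 x) - \<psi>2 x * (\<psi>1 t - \<psi>1 x)))
        has_integral (\<psi>1 x * J2 - \<psi>2 x * J1)) {x..y}"
  proof -
    have "((\<lambda>t. \<psi>1 x * ((V t - lam) * \<psi>2 t) - \<psi>2 x * ((V t - lam) * \<psi>1 t))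
        has_integral (\<psi>1 x * J2 - \<psi>2 x * J1)) {x..y}"
      unfolding J1_def J2_def
      by (intro has_integral_diff has_integral_mult_right sol_dint[OF s1] sol_dint[OF s2] xy)
    then show ?thesis by (simp add: algebra_simps)
  qed
  have n1: "norm (\<psi>1 x * J2 - \<psi>2 x * J1) \<le> 2 * M * M' * om * om"
  proof -
    have "norm (integral {x..y} (\<lambda>t. (V t - lam) * (\<psi>1 x * (\<psi>2 t - \<psi>2 x) - \<psi>2 x * (\<psi>1 t - \<psi>1 x))))
       \<le> integral {x..y} (\<lambda>t. (2 * M * M' * om) * aw lam t)"
    proof (rule integral_norm_bound_integral)
      show "(\<lambda>t. (V t - lam) * (\<psi>1 x * (\<psi>2 t - \<psi>2 x) - \<psi>2 x * (\<psi>1 t - \<psi>1 x))) integrable_on {x..y}"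
        using first by blast
      show "(\<lambda>t. (2 * M * M' * om) * aw lam t) integrable_on {x..y}" by (rule integrable_on_mult_right[OF aw_int])
      fix t assume t: "t \<in> {x..y}"
      have "norm (\<psi>1 x * (\<psi>2 t - \<psi>2 x) - \<psi>2 x * (\<psi>1 t - \<psi>1 x))
            \<le> norm (\<psi>1 x) * norm (\<psi>2 t - \<psi>2 x) + norm (\<psi>2 x) * norm (\<psi>1 t - \<psi>1 x)"
        by (metis norm_mult norm_triangle_ineq4)
      also have "\<dots> \<le> M * (M' * om) + M * (M' * om)"
        using M[of x] dpsi[of t] t xy M0 by (intro add_mono mult_mono) auto
      finally have "norm (\<psi>1 x * (\<psi>2 t - \<psi>2 x) - \<psi>2 x * (\<psi>1 t - \<psi>1 x)) \<le> 2 * M * M' * om" by simp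
      then show "norm ((V t - lam) * (\<psi>1 x * (\<psi>2 t - \<psi>2 x) - \<psi>2 x * (\<psi>1 t - \<psi>1 x))) \<le> 2 * M * M' * om * aw lam t"
        unfolding norm_mult using q_norm[of t lam]
        by (metis mult.commute mult_mono norm_ge_zero aw_nonneg)
    qed
    then have "norm (\<psi>1 x * J2 - \<psi>2 x * J1) \<le> integral {x..y} (\<lambda>t. (2 * M * M' * om) * aw lam t)"
      using integral_unique[OF first] by simp
    also have "\<dots> = 2 * M * M' * om * om" unfolding om_def by simp
    finally show ?thesis .
  qed
  have second: "((\<lambda>t. d1 t * (d2 y - d2 t) - d2 t * (d1 y - d1 t)) has_integral (K1 * d2 y - K2 * d1 y)) {x..y}"
  proof -
    have "((\<lambda>t. d1 t * d2 y - d2 t * d1 y) has_integral (K1 * d2 y - K2 * d1 y)) {x..y}"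
      unfolding K1_def K2_def
      by (intro has_integral_diff has_integral_mult_left sol_psiint[OF s1] sol_psiint[OF s2] xy)
    then show ?thesis by (simp add: algebra_simps)
  qed
  have n2: "norm (K1 * d2 y - K2 * d1 y) \<le> 2 * M * M' * om * om"
  proof -
    have "norm (K1 * d2 y - K2 * d1 y) \<le> (2 * M * M' * om) * (y - x)"
    proof (rule norm_bound_const[OF second xy(2)])
      show "0 \<le> 2 * M * M' * om" using M0 M'0 om0 by simp
      fix t assume t: "t \<in> {x..y}"
      have "norm (d1 t * (d2 y - d2 t) - d2 t * (d1 y - d1 t))
            \<le> norm (d1 t) * norm (d2 y - d2 t) + norm (d2 t) * norm (d1 y - d1 t)"
        by (metis norm_mult norm_triangle_ineq4)
      also have "\<dots> \<le> M' * (M * om) + M' * (M * om)"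
        using M'[of t] dd[of t] t xy M0 M'0 by (intro add_mono mult_mono) auto
      finally show "norm (d1 t * (d2 y - d2 t) - d2 t * (d1 y - d1 t)) \<le> 2 * M * M' * om" by simp
    qed
    also have "\<dots> \<le> (2 * M * M' * om) * om"
      using len[OF xy(2)] M0 M'0 om0 unfolding om_def by (intro mult_left_mono) auto
    finally show ?thesis .
  qed
  show ?thesis unfolding decomp om_def[symmetric]
    using norm_triangle_ineq[of "\<psi>1 x * J2 - \<psi>2 x * J1" "K1 * d2 y - K2 * d1 y"] n1 n2
    by (simp add: power2_eq_square)
qed

end


lemma qil_complex:
  fixes h :: "real \<Rightarrow> complex" and W :: "real \<Rightarrow> real"
  assumes ab: "a \<le> b" and Wc: "continuous_on {a..b} W" and Wm: "mono_on {a..b} W"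
   and inc: "\<And>x y. a \<le> x \<Longrightarrow> x \<le> y \<Longrightarrow> y \<le> b \<Longrightarrow> norm (h y - h x) \<le> C * (W y - W x)^2"
  shows "h b = h a"
proof -
  have re: "Re (h y) - Re (h x) \<le> C * (W y - W x)^2" "- Re (h y) - - Re (h x) \<le> C * (W y - W x)^2"
     "Im (h y) - Im (h x) \<le> C * (W y - W x)^2" "- Im (h y) - - Im (h x) \<le> C * (W y - W x)^2"
    if "a \<le> x" "x \<le> y" "y \<le> b" for x y
  proof -
    have "\<bar>Re (h y - h x)\<bar> \<le> norm (h y - h x)" "\<bar>Im (h y - h x)\<bar> \<le> norm (h y - h x)"
      by (rule abs_Re_le_cmod, rule abs_Im_le_cmod)
    then show "Re (h y) - Re (h x) \<le> C * (W y - W x)^2" "- Re (h y) - - Re (h x) \<le> C * (W y - W x)^2"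
     "Im (h y) - Im (h x) \<le> C * (W y - W x)^2" "- Im (h y) - - Im (h x) \<le> C * (W y - W x)^2"
      using inc[OF that] by auto
  qed
  have r1: "Re (h b) \<le> Re (h a)" by (rule qil[OF ab Wc Wm, of "\<lambda>t. Re (h t)" C]) (rule re)
  have r2: "- Re (h b) \<le> - Re (h a)" by (rule qil[OF ab Wc Wm, of "\<lambda>t. - Re (h t)" C]) (rule re)
  have i1: "Im (h b) \<le> Im (h a)" by (rule qil[OF ab Wc Wm, of "\<lambda>t. Im (h t)" C]) (rule re)
  have i2: "- Im (h b) \<le> - Im (h a)" by (rule qil[OF ab Wc Wm, of "\<lambda>t. - Im (h t)" C]) (rule re)
  show ?thesis using r1 r2 i1 i2 by (simp add: complex_eq_iff)
qed

context pot
begin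

lemma sol_bound:
  assumes s: "is_solution V lam \<psi> d"
  obtains M where "0 \<le> M" "\<And>t. t \<in> {a..b} \<Longrightarrow> norm (\<psi> t) \<le> M"
proof -
  have "bounded (\<psi> ` {a..b})"
    by (rule compact_imp_bounded, rule compact_continuous_image[OF sol_cont[OF s]]) auto
  then obtain M where "\<forall>x\<in>\<psi> ` {a..b}. norm x \<le> M" unfolding bounded_iff by blast
  then show ?thesis using that[of "max M 0"] by force
qed

lemma sol_dbound:
  assumes s: "is_solution V lam \<psi> d" and M: "\<And>t. t \<in> {a..b} \<Longrightarrow> norm (\<psi> t) \<le> M" and M0: "0 \<le> M"
  shows "\<And>t. t \<in> {a..b} \<Longrightarrow> norm (d t) \<le> norm (d a) + M * integral {a..b} (aw lam)"
proof -
  fix t assume t: "t \<in> {a..b}"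
  have "norm (d t - d a) = norm (integral {a..t} (\<lambda>r. (V r - lam) * \<psi> r))"
    using sol_dint[OF s, of a t] t by (simp add: integral_unique)
  also have "\<dots> \<le> integral {a..t} (\<lambda>r. M * aw lam r)"
  proof (rule integral_norm_bound_integral)
    show "(\<lambda>r. (V r - lam) * \<psi> r) integrable_on {a..t}" using sol_dint[OF s, of a t] t by auto
    show "(\<lambda>r. M * aw lam r) integrable_on {a..t}" by (rule integrable_on_mult_right[OF aw_int])
    fix r assume "r \<in> {a..t}"
    then have "norm (\<psi> r) \<le> M" using M t by auto
    then show "norm ((V r - lam) * \<psi> r) \<le> M * aw lam r"
      using q_norm[of r lam] M0 by (simp add: norm_mult mult.commute mult_mono)
  qed
  also have "\<dots> = M * integral {a..t} (aw lam)" by simp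
  also have "\<dots> \<le> M * integral {a..b} (aw lam)"
    using t M0 by (intro mult_left_mono integral_subset_le) (auto intro: aw_int aw_nonneg)
  finally show "norm (d t) \<le> norm (d a) + M * integral {a..b} (aw lam)"
    using norm_triangle_ineq2[of "d t" "d a"] by linarith
qed

lemma wronskian_le:
  assumes s1: "is_solution V lam \<psi>1 d1" and s2: "is_solution V lam \<psi>2 d2" and ab: "a \<le> b"
  shows "\<psi>1 b * d2 b - d1 b * \<psi>2 b = \<psi>1 a * d2 a - d1 a * \<psi>2 a"
proof -
  obtain M1 where M1: "0 \<le> M1" "\<And>t. t \<in> {a..b} \<Longrightarrow> norm (\<psi>1 t) \<le> M1" using sol_bound[OF s1] by metis
  obtain M2 where M2: "0 \<le> M2" "\<And>t. t \<in> {a..b} \<Longrightarrow> norm (\<psi>2 t) \<le> M2" using sol_bound[OF s2] by metis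
  define M where "M = max M1 M2"
  have M0: "0 \<le> M" and M: "\<And>t. t \<in> {a..b} \<Longrightarrow> norm (\<psi>1 t) \<le> M \<and> norm (\<psi>2 t) \<le> M"
    using M1 M2 unfolding M_def by force+
  define M' where "M' = norm (d1 a) + norm (d2 a) + M * integral {a..b} (aw lam)"
  have I0: "0 \<le> integral {a..b} (aw lam)"
    by (rule Henstock_Kurzweil_Integration.integral_nonneg[OF aw_int]) (simp add: aw_nonneg)
  have M'0: "0 \<le> M'" unfolding M'_def using M0 I0 by simp
  have M': "norm (d1 t) \<le> M' \<and> norm (d2 t) \<le> M'" if "t \<in> {a..b}" for t
  proof -
    have 1: "norm (d1 t) \<le> norm (d1 a) + M * integral {a..b} (aw lam)"
      using sol_dbound[OF s1, of a b M, OF _ M0 that] M by auto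
    have 2: "norm (d2 t) \<le> norm (d2 a) + M * integral {a..b} (aw lam)"
      using sol_dbound[OF s2, of a b M, OF _ M0 that] M by auto
    show ?thesis using 1 2 norm_ge_zero[of "d1 a"] norm_ge_zero[of "d2 a"] unfolding M'_def by linarith
  qed
  define W where "W t = integral {a..t} (aw lam)" for t
  have Wc: "continuous_on {a..b} W" unfolding W_def by (rule indefinite_integral_continuous_1[OF aw_int])
  have Wd: "integral {x..y} (aw lam) = W y - W x" if "a \<le> x" "x \<le> y" for x y
    using Henstock_Kurzweil_Integration.integral_combine[of a x y "aw lam"] aw_int that unfolding W_def by auto
  have Wm: "mono_on {a..b} W"
  proof (rule mono_onI)
    fix x y assume "x \<in> {a..b}" "y \<in> {a..b}" "x \<le> y"
    moreover have "0 \<le> integral {x..y} (aw lam)"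
      by (rule Henstock_Kurzweil_Integration.integral_nonneg[OF aw_int]) (simp add: aw_nonneg)
    ultimately show "W x \<le> W y" using Wd[of x y] by auto
  qed
  show ?thesis
  proof (rule qil_complex[OF ab Wc Wm, where h="\<lambda>t. \<psi>1 t * d2 t - d1 t * \<psi>2 t"])
    fix x y assume xy: "a \<le> x" "x \<le> y" "y \<le> b"
    show "norm ((\<psi>1 y * d2 y - d1 y * \<psi>2 y) - (\<psi>1 x * d2 x - d1 x * \<psi>2 x)) \<le> (4 * M * M') * (W y - W x)^2"
      using wr_est[OF s1 s2 M M' M0 M'0 xy] Wd[of x y] xy by simp
  qed
qed

lemma wronskian:
  assumes s1: "is_solution V lam \<psi>1 d1" and s2: "is_solution V lam \<psi>2 d2"
  shows "\<psi>1 b * d2 b - d1 b * \<psi>2 b = \<psi>1 a * d2 a - d1 a * \<psi>2 a"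
  using wronskian_le[OF s1 s2, of a b] wronskian_le[OF s1 s2, of b a] by (cases "a \<le> b") auto

end


context pot
begin

lemma sol_diff:
  assumes s1: "is_solution V lam \<psi>1 d1" and s2: "is_solution V lam \<psi>2 d2"
  shows "is_solution V lam (\<lambda>x. \<psi>1 x - \<psi>2 x) (\<lambda>x. d1 x - d2 x)"
  unfolding is_solution_def
proof (intro conjI allI impI)
  fix x show "((\<lambda>x. \<psi>1 x - \<psi>2 x) has_vector_derivative d1 x - d2 x) (at x)"
    using s1 s2 unfolding is_solution_def by (intro has_vector_derivative_diff) auto
next
  fix a b :: real assume ab: "a \<le> b"
  have "((\<lambda>t. (V t - lam) * \<psi>1 t - (V t - lam) * \<psi>2 t) has_integral (d1 b - d1 a) - (d2 b - d2 a)) {a..b}"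
    by (intro has_integral_diff sol_dint[OF s1 ab] sol_dint[OF s2 ab])
  then show "((\<lambda>t. (V t - lam) * (\<psi>1 t - \<psi>2 t)) has_integral d1 b - d2 b - (d1 a - d2 a)) {a..b}"
    by (simp add: algebra_simps)
qed

lemma sol_neg:
  assumes s: "is_solution V lam \<psi> d"
  shows "is_solution V lam (\<lambda>x. - \<psi> x) (\<lambda>x. - d x)"
proof -
  have z: "is_solution V lam (\<lambda>x. 0) (\<lambda>x. 0)" unfolding is_solution_def by auto
  show ?thesis using sol_diff[OF z s] by simp
qed

lemma uniq:
  assumes s1: "is_solution V lam \<psi>1 d1" and s2: "is_solution V lam \<psi>2 d2"
    and e1: "\<psi>1 u = \<psi>2 u" and e2: "d1 u = d2 u"
  shows "\<psi>1 x = \<psi>2 x \<and> d1 x = d2 x"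
proof -
  define \<psi> where "\<psi> y = \<psi>1 y - \<psi>2 y" for y
  define d where "d y = d1 y - d2 y" for y
  have s: "is_solution V lam \<psi> d" unfolding \<psi>_def[abs_def] d_def[abs_def] by (rule sol_diff[OF s1 s2])
  have z: "\<psi> u = 0" "d u = 0" using e1 e2 by (auto simp: \<psi>_def d_def)
  obtain \<phi> e where ph: "is_solution V lam \<phi> e" "\<phi> x = 0" "e x = 1" using existence by blast
  obtain \<phi>' e' where ph': "is_solution V lam \<phi>' e'" "\<phi>' x = 1" "e' x = 0" using existence by blast
  have "\<psi> x * e x - d x * \<phi> x = \<psi> u * e u - d u * \<phi> u" by (rule wronskian[OF s ph(1)])
  then have 1: "\<psi> x = 0" using z ph by simp
  have "\<psi> x * e' x - d x * \<phi>' x = \<psi> u * e' u - d u * \<phi>' u" by (rule wronskian[OF s ph'(1)])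
  then have 2: "d x = 0" using z ph' by simp
  show ?thesis using 1 2 by (simp add: \<psi>_def d_def)
qed

lemma sol_s_char:
  assumes s: "is_solution V lam \<psi> d" and "\<psi> u = 0" "d u = 1"
  shows "sol_s V lam u = \<psi>"
  unfolding sol_s_def
proof (rule the_equality)
  show "\<exists>\<psi>'. is_solution V lam \<psi> \<psi>' \<and> \<psi> u = 0 \<and> \<psi>' u = 1" using assms by blast
next
  fix \<psi>2 assume "\<exists>\<psi>'. is_solution V lam \<psi>2 \<psi>' \<and> \<psi>2 u = 0 \<and> \<psi>' u = 1"
  then obtain d2 where "is_solution V lam \<psi>2 d2" "\<psi>2 u = 0" "d2 u = 1" by blast
  then show "\<psi>2 = \<psi>" using uniq[OF _ s, of \<psi>2 d2 u] assms by auto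
qed

lemma sol_c_char:
  assumes s: "is_solution V lam \<psi> d" and "\<psi> u = 1" "d u = 0"
  shows "sol_c V lam u = \<psi>"
  unfolding sol_c_def
proof (rule the_equality)
  show "\<exists>\<psi>'. is_solution V lam \<psi> \<psi>' \<and> \<psi> u = 1 \<and> \<psi>' u = 0" using assms by blast
next
  fix \<psi>2 assume "\<exists>\<psi>'. is_solution V lam \<psi>2 \<psi>' \<and> \<psi>2 u = 1 \<and> \<psi>' u = 0"
  then obtain d2 where "is_solution V lam \<psi>2 d2" "\<psi>2 u = 1" "d2 u = 0" by blast
  then show "\<psi>2 = \<psi>" using uniq[OF _ s, of \<psi>2 d2 u] assms by auto
qed

lemma sol_c'_char:
  assumes s: "is_solution V lam \<psi> d" and "\<psi> u = 1" "d u = 0"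
  shows "sol_c' V lam u x = d x"
  unfolding sol_c'_def sol_c_char[OF assms]
  using s unfolding is_solution_def by (auto intro: vector_derivative_at)

lemma sol_s_ex: "\<exists>d. is_solution V lam (sol_s V lam u) d \<and> sol_s V lam u u = 0 \<and> d u = 1"
proof -
  obtain \<psi> d where "is_solution V lam \<psi> d" "\<psi> u = 0" "d u = 1" using existence by blast
  then show ?thesis using sol_s_char by metis
qed

lemma sol_c_ex: "\<exists>d. is_solution V lam (sol_c V lam u) d \<and> sol_c V lam u u = 1 \<and> d u = 0
   \<and> (\<forall>x. sol_c' V lam u x = d x)"
proof -
  obtain \<psi> d where "is_solution V lam \<psi> d" "\<psi> u = 1" "d u = 0" using existence by blast
  then show ?thesis using sol_c_char sol_c'_char by metis
qed

lemma sol_shift: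
  assumes s: "is_solution V lam \<psi> d" and per: "\<And>x. V (x + c) = V x"
  shows "is_solution V lam (\<lambda>x. \<psi> (x + c)) (\<lambda>x. d (x + c))"
  unfolding is_solution_def
proof (intro conjI allI impI)
  fix x
  have "((\<lambda>x. x + c) has_vector_derivative 1) (at x)"
    by (auto intro!: derivative_eq_intros)
  moreover have "(\<psi> has_vector_derivative d (x + c)) (at (x + c))" using s unfolding is_solution_def by blast
  ultimately have "((\<psi> \<circ> (\<lambda>x. x + c)) has_vector_derivative (1::real) *\<^sub>R d (x + c)) (at x)"
    by (rule vector_diff_chain_at)
  then show "((\<lambda>x. \<psi> (x + c)) has_vector_derivative d (x + c)) (at x)" by (simp add: o_def)
next
  fix a b :: real assume ab: "a \<le> b"
  have "((\<lambda>t. (V t - lam) * \<psi> t) has_integral d (b + c) - d (a + c)) {a + c..b + c}"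
    using sol_dint[OF s] ab by simp
  then have "((\<lambda>t. (V (t + c) - lam) * \<psi> (t + c)) has_integral d (b + c) - d (a + c)) {a + c - c..b + c - c}"
    by (rule has_integral_shift_real_ivl)
  then show "((\<lambda>t. (V t - lam) * \<psi> (t + c)) has_integral d (b + c) - d (a + c)) {a..b}"
    by (simp add: per)
qed

lemma sol_refl:
  assumes s: "is_solution V lam \<psi> d" and sym: "\<And>t. cnj (V (c - t)) = V t"
  shows "is_solution V (cnj lam) (\<lambda>x. cnj (\<psi> (c - x))) (\<lambda>x. - cnj (d (c - x)))"
  unfolding is_solution_def
proof (intro conjI allI impI)
  fix x
  have "((\<lambda>x. c - x) has_vector_derivative -1) (at x)"
    by (auto intro!: derivative_eq_intros)
  moreover have "(\<psi> has_vector_derivative d (c - x)) (at (c - x))" using s unfolding is_solution_def by blast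
  ultimately have "((\<psi> \<circ> (\<lambda>x. c - x)) has_vector_derivative (-1::real) *\<^sub>R d (c - x)) (at x)"
    by (rule vector_diff_chain_at)
  then have "((\<lambda>x. \<psi> (c - x)) has_vector_derivative - d (c - x)) (at x)" by (simp add: o_def)
  then have "((\<lambda>x. cnj (\<psi> (c - x))) has_vector_derivative cnj (- d (c - x))) (at x)"
    by (rule has_vector_derivative_cnj)
  then show "((\<lambda>x. cnj (\<psi> (c - x))) has_vector_derivative - cnj (d (c - x))) (at x)" by simp
next
  fix a b :: real assume ab: "a \<le> b"
  define F where "F s = cnj ((V s - lam) * \<psi> s)" for s
  have "((\<lambda>t. (V t - lam) * \<psi> t) has_integral d (c - a) - d (c - b)) {c - b..c - a}"
    using sol_dint[OF s] ab by simp
  then have "(F has_integral cnj (d (c - a) - d (c - b))) {c - b..c - a}"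
    using has_integral_cnj[of "\<lambda>t. (V t - lam) * \<psi> t" "d (c - a) - d (c - b)" "{c - b..c - a}"]
    unfolding F_def[abs_def] o_def by blast
  then have "((\<lambda>x. F (- x)) has_integral cnj (d (c - a) - d (c - b))) {a - c..b - c}"
    using has_integral_reflect_real[of F _ "c - a" "c - b"] by simp
  then have "((\<lambda>x. F (- (x + - c))) has_integral cnj (d (c - a) - d (c - b))) {a - c - - c..b - c - - c}"
    by (rule has_integral_shift_real_ivl)
  then have "((\<lambda>x. F (c - x)) has_integral cnj (d (c - a) - d (c - b))) {a..b}" by simp
  moreover have "F (c - t) = (V t - cnj lam) * cnj (\<psi> (c - t))" for t
    unfolding F_def using sym[of t] by simp
  ultimately show "((\<lambda>t. (V t - cnj lam) * cnj (\<psi> (c - t))) has_integral - cnj (d (c - b)) - - cnj (d (c - a))) {a..b}"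
    by simp
qed

end


context pot
begin

lemma sol_s_swap: "sol_s V lam a b = - sol_s V lam b a"
proof -
  obtain da where a: "is_solution V lam (sol_s V lam a) da" "sol_s V lam a a = 0" "da a = 1"
    using sol_s_ex by blast
  obtain db where b: "is_solution V lam (sol_s V lam b) db" "sol_s V lam b b = 0" "db b = 1"
    using sol_s_ex by blast
  show ?thesis using wronskian[OF a(1) b(1), of b a] a b by simp
qed

lemma sol_c'_swap: "sol_c' V lam a b = - sol_c' V lam b a"
proof -
  obtain da where a: "is_solution V lam (sol_c V lam a) da" "sol_c V lam a a = 1" "da a = 0"
     "\<forall>x. sol_c' V lam a x = da x"
    using sol_c_ex by blast
  obtain db where b: "is_solution V lam (sol_c V lam b) db" "sol_c V lam b b = 1" "db b = 0"
     "\<forall>x. sol_c' V lam b x = db x"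
    using sol_c_ex by blast
  have "- da b = db a" using wronskian[OF a(1) b(1), of b a] a b by simp
  then have "da b = - db a" by (metis minus_minus)
  then show ?thesis using a(4) b(4) by simp
qed

lemma sol_s_shift:
  assumes per: "\<And>x. V (x + c) = V x"
  shows "sol_s V lam (a - c) x = sol_s V lam a (x + c)"
proof -
  obtain d where s: "is_solution V lam (sol_s V lam a) d" "sol_s V lam a a = 0" "d a = 1"
    using sol_s_ex by blast
  have "sol_s V lam (a - c) = (\<lambda>x. sol_s V lam a (x + c))"
    by (rule sol_s_char[OF sol_shift[OF s(1) per]]) (use s in auto)
  then show ?thesis by simp
qed

lemma sol_c'_shift:
  assumes per: "\<And>x. V (x + c) = V x"
  shows "sol_c' V lam (a - c) x = sol_c' V lam a (x + c)"
proof -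
  obtain d where s: "is_solution V lam (sol_c V lam a) d" "sol_c V lam a a = 1" "d a = 0"
     "\<forall>x. sol_c' V lam a x = d x"
    using sol_c_ex by blast
  have "sol_c' V lam (a - c) x = d (x + c)"
    by (rule sol_c'_char[OF sol_shift[OF s(1) per]]) (use s in auto)
  then show ?thesis using s(4) by simp
qed

lemma dir_id:
  assumes per: "\<And>x. V (x + pi) = V x" and sym: "\<And>x. cnj (V (- x)) = V x"
  shows "sol_s V z (pi - x0) (pi - x0 + pi) = cnj (sol_s V (cnj z) x0 (x0 + pi))"
proof -
  have symc: "cnj (V (pi - t)) = V t" for t
    using sym[of "t - pi"] per[of "t - pi"] by simp
  obtain d where s: "is_solution V (cnj z) (sol_s V (cnj z) x0) d" "sol_s V (cnj z) x0 x0 = 0" "d x0 = 1"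
    using sol_s_ex by blast
  have "sol_s V z (pi - x0) = (\<lambda>x. - cnj (sol_s V (cnj z) x0 (pi - x)))"
    by (rule sol_s_char[OF sol_neg[OF sol_refl[OF s(1) symc], simplified]]) (use s in auto)
  then have "sol_s V z (pi - x0) (pi - x0 + pi) = - cnj (sol_s V (cnj z) x0 (x0 - pi))" by simp
  also have "sol_s V (cnj z) x0 (x0 - pi) = - sol_s V (cnj z) (x0 - pi) x0" by (rule sol_s_swap)
  also have "sol_s V (cnj z) (x0 - pi) x0 = sol_s V (cnj z) x0 (x0 + pi)" by (rule sol_s_shift[OF per])
  finally show ?thesis by simp
qed

lemma neu_id:
  assumes per: "\<And>x. V (x + pi) = V x" and sym: "\<And>x. cnj (V (- x)) = V x"
  shows "sol_c' V z (pi - x0) (pi - x0 + pi) = cnj (sol_c' V (cnj z) x0 (x0 + pi))"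
proof -
  have symc: "cnj (V (pi - t)) = V t" for t
    using sym[of "t - pi"] per[of "t - pi"] by simp
  obtain d where s: "is_solution V (cnj z) (sol_c V (cnj z) x0) d" "sol_c V (cnj z) x0 x0 = 1" "d x0 = 0"
     "\<forall>x. sol_c' V (cnj z) x0 x = d x"
    using sol_c_ex by blast
  have "sol_c' V z (pi - x0) (pi - x0 + pi) = - cnj (d (pi - (pi - x0 + pi)))"
    by (rule sol_c'_char[OF sol_refl[OF s(1) symc], simplified]) (use s in auto)
  also have "\<dots> = - cnj (sol_c' V (cnj z) x0 (x0 - pi))" using s(4) by simp
  also have "sol_c' V (cnj z) x0 (x0 - pi) = - sol_c' V (cnj z) (x0 - pi) x0" by (rule sol_c'_swap)
  also have "sol_c' V (cnj z) (x0 - pi) x0 = sol_c' V (cnj z) x0 (x0 + pi)" by (rule sol_c'_shift[OF per])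
  finally show ?thesis by simp
qed

end

theorem theorem4p2:
  fixes V :: "real \<Rightarrow> complex" and x0 :: real
  assumes loc_int: "\<And>a b. V absolutely_integrable_on {a..b}"
    and periodic: "\<And>x. V (x + pi) = V x"
    and symm: "\<And>x. cnj (V (- x)) = V x"
    and x0: "x0 \<in> {0..pi}"
  shows "(\<forall>mu. dirichlet_enum V x0 mu \<longrightarrow>
            (\<exists>mu'. dirichlet_enum V (pi - x0) mu' \<and> (\<forall>j\<ge>1. cnj (mu' j) = mu j)))
       \<and> (\<forall>nu. neumann_enum V x0 nu \<longrightarrow>
            (\<exists>nu'. neumann_enum V (pi - x0) nu' \<and> (\<forall>k. cnj (nu' k) = nu k)))"
proof -
  interpret pot V by unfold_locales (rule loc_int)
  show ?thesis
  proof (intro conjI allI impI)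
    fix mu assume "dirichlet_enum V x0 mu"
    then have "zero_enum (\<lambda>lam. sol_s V lam x0 (x0 + pi)) 1 mu" unfolding dirichlet_enum_def .
    then have "zero_enum (\<lambda>lam. sol_s V lam (pi - x0) (pi - x0 + pi)) 1 (\<lambda>j. cnj (mu j))"
      by (rule zero_enum_cnj) (rule dir_id[OF periodic symm])
    then show "\<exists>mu'. dirichlet_enum V (pi - x0) mu' \<and> (\<forall>j\<ge>1. cnj (mu' j) = mu j)"
      unfolding dirichlet_enum_def by (intro exI[of _ "\<lambda>j. cnj (mu j)"]) simp
  next
    fix nu assume "neumann_enum V x0 nu"
    then have "zero_enum (\<lambda>lam. sol_c' V lam x0 (x0 + pi)) 0 nu" unfolding neumann_enum_def .
    then have "zero_enum (\<lambda>lam. sol_c' V lam (pi - x0) (pi - x0 + pi)) 0 (\<lambda>j. cnj (nu j))"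
      by (rule zero_enum_cnj) (rule neu_id[OF periodic symm])
    then show "\<exists>nu'. neumann_enum V (pi - x0) nu' \<and> (\<forall>k. cnj (nu' k) = nu k)"
      unfolding neumann_enum_def by (intro exI[of _ "\<lambda>j. cnj (nu j)"]) simp
  qed
qed


end
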